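(* Let $\mu,\nu$ be Borel probability measures on $\mathbb{R}^d$ with compact supports and $\mu\ll\mathcal{L}^d$. Let $c:\mathbb{R}^d\times\mathbb{R}^d\to\mathbb{R}^+$ be continuous and satisfy: (i) for every $x$ there is a unique $y\in\mathbb{R}^d$ with $c(x,y)=0$, and for every $y\in\mathbb{R}^d$, $\inf_{x\in\mathbb{R}^d}c(x,y)=0$; (ii) for every $y$, $c(\cdot,y)$ is strictly quasiconvex: $c((1-t)x+t\bar x,y)<\max\{c(x,y),c(\bar x,y)\}$ for all $t\in(0,1)$ and all $x\neq\bar x$; (iii) for all $\lambda>0$ and $y\in\mathbb{R}^d$, the convex set $\{z: c(z,y)\le\lambda\}$ has differentiable ($C^1$) boundary; (iv) for all $x,y,\tilde y\in\mathbb{R}^d$ and all $\lambda>0$: if $c(x,y)=c(x,\tilde y)=\lambda$ and $n_{c(\cdot,y)}(x)=n_{c(\cdot,\tilde y)}(x)$, then $y=\tilde y$. If $\gamma\in\Pi(\mu,\nu)$ is $\infty$-monotone, then $\gamma$ vanishes outside the graph of a Borel map $T:\mathbb{R}^d\to\mathbb{R}^d$ with $T_\sharp\mu=\nu$.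
   Context: $\Pi(\mu,\nu)$ is the set of Borel probability measures on $\mathbb{R}^d\times\mathbb{R}^d$ with marginals $\mu$ and $\nu$. For $y\in\mathbb{R}^d$ and $x$ with $c(x,y)=\lambda>0$, $n_{c(\cdot,y)}(x)$ denotes the unit outer normal at $x$ to the sublevel set $\{z: c(z,y)\le\lambda\}$. A set $\Gamma\subset\mathbb{R}^d\times\mathbb{R}^d$ is $\infty$-monotone if for all $(x,y),(x',y')\in\Gamma$, $\max\{c(x,y),c(x',y')\}\le\max\{c(x,y'),c(x',y)\}$; a plan $\gamma$ is $\infty$-monotone if it is concentrated on an $\infty$-monotone set. *)

theory Defs
  imports "HOL-Probability.Probability"
begin

definition measure_support :: "'a::metric_space measure \<Rightarrow> 'a set" where
  "measure_support M = {x. \<forall>e>0. emeasure M (ball x e) > 0}"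

definition transport_plans ::
  "'a::euclidean_space measure \<Rightarrow> 'a measure \<Rightarrow> ('a \<times> 'a) measure set" where
  "transport_plans \<mu> \<nu> = {\<gamma>. sets \<gamma> = sets borel \<and> prob_space \<gamma> \<and>
       distr \<gamma> borel fst = \<mu> \<and> distr \<gamma> borel snd = \<nu>}"

definition inf_monotone_set :: "('a \<Rightarrow> 'a \<Rightarrow> real) \<Rightarrow> ('a \<times> 'a) set \<Rightarrow> bool" where
  "inf_monotone_set c \<Gamma> \<longleftrightarrow>
     (\<forall>x y x' y'. (x, y) \<in> \<Gamma> \<longrightarrow> (x', y') \<in> \<Gamma> \<longrightarrow>
        max (c x y) (c x' y') \<le> max (c x y') (c x' y))"

definition inf_monotone_plan :: "('a \<Rightarrow> 'a \<Rightarrow> real) \<Rightarrow> ('a \<times> 'a) measure \<Rightarrow> bool" where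
  "inf_monotone_plan c \<gamma> \<longleftrightarrow>
     (\<exists>\<Gamma>. inf_monotone_set c \<Gamma> \<and> (\<exists>N \<in> null_sets \<gamma>. UNIV - \<Gamma> \<subseteq> N))"

definition C1_boundary :: "'a::euclidean_space set \<Rightarrow> bool" where
  "C1_boundary S \<longleftrightarrow>
     (\<forall>x \<in> frontier S. \<exists>U g G. open U \<and> x \<in> U \<and>
        (\<forall>z \<in> U. (g has_derivative (\<lambda>h. G z \<bullet> h)) (at z)) \<and>
        continuous_on U G \<and> G x \<noteq> 0 \<and>
        S \<inter> U = {z \<in> U. g z \<le> (0::real)})"

text \<open>Unit outer normal at x to a convex set S (unique when the boundary is C^1).\<close>
definition outer_normal :: "'a::euclidean_space set \<Rightarrow> 'a \<Rightarrow> 'a" where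
  "outer_normal S x = (THE v. norm v = 1 \<and> (\<forall>z \<in> S. v \<bullet> (z - x) \<le> 0))"

definition sublevel :: "('a \<Rightarrow> 'a \<Rightarrow> real) \<Rightarrow> 'a \<Rightarrow> real \<Rightarrow> 'a set" where
  "sublevel c y l = {z. c z y \<le> l}"

end

theory Submission
  imports Defs
begin

lemma qc_convex:
  fixes f :: "'a::real_vector \<Rightarrow> real"
  assumes qc: "\<And>x x' t. x \<noteq> x' \<Longrightarrow> 0 < t \<Longrightarrow> t < 1 \<Longrightarrow> f ((1 - t) *\<^sub>R x + t *\<^sub>R x') < max (f x) (f x')"
  shows "convex {z. f z \<le> l}"
proof (rule convexI)
  fix x y :: 'a and u v :: real
  assume x: "x \<in> {z. f z \<le> l}" and y: "y \<in> {z. f z \<le> l}" and u: "0 \<le> u" "0 \<le> v" "u + v = 1"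
  show "u *\<^sub>R x + v *\<^sub>R y \<in> {z. f z \<le> l}"
  proof (cases "x = y \<or> v = 0 \<or> v = 1")
    case True
    then show ?thesis using x y u
      by (auto simp: scaleR_left_distrib[symmetric])
  next
    case False
    then have "f ((1 - v) *\<^sub>R x + v *\<^sub>R y) < max (f x) (f y)"
      using u by (intro qc) auto
    moreover have "u = 1 - v" using u by simp
    ultimately show ?thesis using x y by auto
  qed
qed

lemma qc_not_interior:
  fixes f :: "'a::real_normed_vector \<Rightarrow> real"
  assumes qc: "\<And>x x' t. x \<noteq> x' \<Longrightarrow> 0 < t \<Longrightarrow> t < 1 \<Longrightarrow> f ((1 - t) *\<^sub>R x + t *\<^sub>R x') < max (f x) (f x')"
    and w: "f w < l" and x0: "f x0 = l"
  shows "x0 \<notin> interior {z. f z \<le> l}"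
proof
  assume "x0 \<in> interior {z. f z \<le> l}"
  then obtain e where e: "e > 0" "ball x0 e \<subseteq> {z. f z \<le> l}"
    by (meson mem_interior)
  have wx: "w \<noteq> x0" using w x0 by auto
  define t where "t = e / (2 * norm (x0 - w))"
  have nz: "norm (x0 - w) > 0" using wx by simp
  have t: "t > 0" using e nz by (simp add: t_def)
  define p where "p = x0 + t *\<^sub>R (x0 - w)"
  have "norm (p - x0) = t * norm (x0 - w)" using t by (simp add: p_def)
  also have "\<dots> = e / 2" using nz by (simp add: t_def)
  finally have "p \<in> ball x0 e" using e by (simp add: dist_norm norm_minus_commute)
  then have fp: "f p \<le> l" using e by auto
  define \<tau> where "\<tau> = 1 / (1 + t)"
  have tau: "0 < \<tau>" "\<tau> < 1" using t by (auto simp: \<tau>_def)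
  have "(1 - \<tau>) *\<^sub>R w + \<tau> *\<^sub>R p = x0"
  proof -
    have "(1 - \<tau>) *\<^sub>R w + \<tau> *\<^sub>R p = (1 - \<tau> - \<tau> * t) *\<^sub>R w + (\<tau> * (1 + t)) *\<^sub>R x0"
      by (simp add: p_def algebra_simps)
    also have "\<tau> * (1 + t) = 1" using t by (simp add: \<tau>_def)
    also have "1 - \<tau> - \<tau> * t = 0" using t by (simp add: \<tau>_def field_simps)
    finally show ?thesis by simp
  qed
  moreover have "w \<noteq> p"
  proof
    assume "w = p"
    then have "t *\<^sub>R (x0 - w) = w - x0" by (simp add: p_def algebra_simps)
    then have "(1 + t) *\<^sub>R (x0 - w) = 0" by (simp add: algebra_simps)
    then show False using t wx by simp
  qed
  ultimately have "f x0 < max (f w) (f p)" using qc[OF _ tau] by metis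
  then show False using w x0 fp by auto
qed

lemma unit_normal_unique:
  fixes v n0 :: "'a::euclidean_space"
  assumes n0: "norm n0 = 1" and v: "norm v = 1"
    and H: "\<And>h. n0 \<bullet> h < 0 \<Longrightarrow> v \<bullet> h \<le> 0"
  shows "v = n0"
proof -
  define w where "w = v - (v \<bullet> n0) *\<^sub>R n0"
  have n0n0: "n0 \<bullet> n0 = 1" using n0 by (simp add: dot_square_norm)
  have wn: "w \<bullet> n0 = 0" by (simp add: w_def inner_diff_left n0n0)
  have vw: "v \<bullet> w = w \<bullet> w"
    by (simp add: w_def inner_diff_right inner_diff_left inner_commute n0n0 algebra_simps)
  have "w \<bullet> w \<le> e * (v \<bullet> n0)" if e: "e > 0" for e
  proof -
    have "n0 \<bullet> (w - e *\<^sub>R n0) < 0" using e wn n0n0 by (simp add: inner_diff_right inner_commute)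
    then have "v \<bullet> (w - e *\<^sub>R n0) \<le> 0" by (rule H)
    then show ?thesis using vw by (simp add: inner_diff_right)
  qed
  have vn: "v \<bullet> n0 \<ge> 0"
  proof -
    have "n0 \<bullet> (- n0) < 0" using n0n0 by simp
    then have "v \<bullet> (- n0) \<le> 0" by (rule H)
    then show ?thesis by simp
  qed
  have "w \<bullet> w \<le> 0"
  proof (rule field_le_epsilon)
    fix e :: real assume "e > 0"
    have "w \<bullet> w \<le> (e / (1 + v \<bullet> n0)) * (v \<bullet> n0)" using \<open>e>0\<close> vn by (intro \<open>\<And>e. e > 0 \<Longrightarrow> _\<close>) auto
    also have "\<dots> \<le> e" using \<open>e>0\<close> vn by (simp add: field_simps)
    finally show "w \<bullet> w \<le> 0 + e" by simp
  qed
  then have "w = 0" by (meson inner_gt_zero_iff not_le)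
  then have veq: "v = (v \<bullet> n0) *\<^sub>R n0" by (simp add: w_def)
  then have "norm v = \<bar>v \<bullet> n0\<bar>" using n0 by (metis norm_scaleR mult.right_neutral)
  then have "v \<bullet> n0 = 1" using v vn by simp
  then show ?thesis using veq by simp
qed

lemma normal_cone:
  fixes f :: "'a::euclidean_space \<Rightarrow> real"
  assumes qc: "\<And>x x' t. x \<noteq> x' \<Longrightarrow> 0 < t \<Longrightarrow> t < 1 \<Longrightarrow> f ((1 - t) *\<^sub>R x + t *\<^sub>R x') < max (f x) (f x')"
    and contf: "continuous_on UNIV f"
    and C1: "C1_boundary {z. f z \<le> l}"
    and w: "f w < l" and x0: "f x0 = l"
  shows "norm (outer_normal {z. f z \<le> l} x0) = 1"
    and "\<And>\<alpha>. \<alpha> > 0 \<Longrightarrow> \<exists>\<delta>>0. \<forall>v. 0 < norm v \<longrightarrow> norm v \<le> \<delta> \<longrightarrow>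
            outer_normal {z. f z \<le> l} x0 \<bullet> v \<le> - \<alpha> * norm v \<longrightarrow> f (x0 + v) < l"
proof -
  define S where "S = {z. f z \<le> l}"
  have cvx: "convex S" unfolding S_def by (rule qc_convex) (rule qc)
  have clo: "closed S" unfolding S_def
    by (rule closed_Collect_le[OF contf continuous_on_const])
  have x0S: "x0 \<in> S" using x0 by (simp add: S_def)
  have nint: "x0 \<notin> interior S" unfolding S_def by (rule qc_not_interior[OF qc w x0])
  have "x0 \<in> closure S" using x0S closure_subset by blast
  then have fr: "x0 \<in> frontier S" using nint unfolding frontier_def by blast
  have "\<exists>U g G. open U \<and> x0 \<in> U \<and>
        (\<forall>z \<in> U. (g has_derivative (\<lambda>h. G z \<bullet> h)) (at z)) \<and>
        continuous_on U G \<and> G x0 \<noteq> 0 \<and>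
        S \<inter> U = {z \<in> U. g z \<le> (0::real)}"
    using bspec[OF C1[unfolded C1_boundary_def] fr[unfolded S_def]] unfolding S_def .
  then obtain U g G where U: "open U" "x0 \<in> U"
    and der0: "\<forall>z \<in> U. (g has_derivative (\<lambda>h. G z \<bullet> h)) (at z)"
    and Gx0: "G x0 \<noteq> 0" and SU: "S \<inter> U = {z \<in> U. g z \<le> (0::real)}"
    by metis
  have der: "(g has_derivative (\<lambda>h. G z \<bullet> h)) (at z)" if "z \<in> U" for z
    using der0 that by blast
  define Gx where "Gx = G x0"
  have nGx: "norm Gx > 0" using Gx0 by (simp add: Gx_def)
  have expand: "\<exists>d>0. \<forall>z. norm (z - x0) < d \<longrightarrow> \<bar>g z - g x0 - Gx \<bullet> (z - x0)\<bar> \<le> e * norm (z - x0)"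
    if "e > 0" for e
  proof -
    have "\<forall>e>0. \<exists>d>0. \<forall>y. norm (y - x0) < d \<longrightarrow> norm (g y - g x0 - G x0 \<bullet> (y - x0)) \<le> e * norm (y - x0)"
      using der[OF U(2)] unfolding has_derivative_at_alt by blast
    then show ?thesis using that unfolding Gx_def real_norm_def by blast
  qed
  obtain dU where dU: "dU > 0" "ball x0 dU \<subseteq> U" using U by (meson openE)
  have inS: "z \<in> S" if "norm (z - x0) < dU" "g z \<le> 0" for z
  proof -
    have "z \<in> ball x0 dU" using that by (simp add: dist_norm norm_minus_commute)
    then have "z \<in> U" using dU by blast
    then show ?thesis using SU that by auto
  qed
  have gS: "g z \<le> 0" if "norm (z - x0) < dU" "z \<in> S" for z
  proof -
    have "z \<in> ball x0 dU" using that by (simp add: dist_norm norm_minus_commute)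
    then have "z \<in> U" using dU by blast
    then show ?thesis using SU that by auto
  qed
  have gx0le: "g x0 \<le> 0" using gS[of x0] x0S dU by simp
  have g0: "g x0 = 0"
  proof (rule ccontr)
    assume "g x0 \<noteq> 0"
    then have neg: "g x0 < 0" using gx0le by simp
    obtain d where d: "d > 0" "\<forall>z. norm (z - x0) < d \<longrightarrow> \<bar>g z - g x0 - Gx \<bullet> (z - x0)\<bar> \<le> 1 * norm (z - x0)"
      using expand[of 1] by auto
    define r where "r = min (min d dU) (- g x0 / (norm Gx + 1))"
    have r: "r > 0" using d dU neg nGx by (simp add: r_def divide_neg_pos add_pos_nonneg)
    have "ball x0 r \<subseteq> S"
    proof
      fix z assume "z \<in> ball x0 r"
      then have nz: "norm (z - x0) < r" by (simp add: dist_norm norm_minus_commute)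
      have "Gx \<bullet> (z - x0) \<le> norm Gx * norm (z - x0)" by (rule norm_cauchy_schwarz)
      moreover have "norm (z - x0) < d" using nz by (simp add: r_def)
      then have "g z - g x0 - Gx \<bullet> (z - x0) \<le> norm (z - x0)" using abs_le_D1[OF d(2)[rule_format]] by simp
      moreover have "(norm Gx + 1) * norm (z - x0) < - g x0"
      proof -
        have "(norm Gx + 1) * norm (z - x0) < (norm Gx + 1) * r" using nz nGx by (intro mult_strict_left_mono) (auto simp: add_pos_nonneg)
        also have "\<dots> \<le> (norm Gx + 1) * (- g x0 / (norm Gx + 1))" using nGx by (intro mult_left_mono) (auto simp: r_def)
        also have "\<dots> = - g x0" using nGx by (smt (verit) nonzero_mult_div_cancel_left times_divide_eq_right)
        finally show ?thesis .
      qed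
      ultimately have "g z < 0" by (simp add: algebra_simps)
      then show "z \<in> S" using inS nz by (auto simp: r_def)
    qed
    then have "x0 \<in> interior S" using r unfolding mem_interior by blast
    then show False using nint by simp
  qed
  define n0 where "n0 = inverse (norm Gx) *\<^sub>R Gx"
  have n0n: "norm n0 = 1" using nGx by (simp add: n0_def)
  have n0dot: "n0 \<bullet> h = (Gx \<bullet> h) / norm Gx" for h by (simp add: n0_def divide_inverse mult.commute)
  have supp: "n0 \<bullet> (z - x0) \<le> 0" if zS: "z \<in> S" for z
  proof (rule ccontr)
    assume "\<not> n0 \<bullet> (z - x0) \<le> 0"
    then have k: "Gx \<bullet> (z - x0) > 0" using nGx by (simp add: n0dot divide_le_0_iff)
    then have zx: "z \<noteq> x0" by auto
    then have nz: "norm (z - x0) > 0" by simp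
    define e where "e = Gx \<bullet> (z - x0) / (2 * norm (z - x0))"
    have e: "e > 0" using k nz by (simp add: e_def)
    obtain d where d: "d > 0" "\<forall>y. norm (y - x0) < d \<longrightarrow> \<bar>g y - g x0 - Gx \<bullet> (y - x0)\<bar> \<le> e * norm (y - x0)"
      using expand[OF e] by auto
    define t where "t = min (1/2) (min d dU / (2 * norm (z - x0)))"
    have t: "t > 0" "t < 1" using d dU nz by (auto simp: t_def)
    define p where "p = (1 - t) *\<^sub>R x0 + t *\<^sub>R z"
    have pS: "p \<in> S" unfolding p_def using cvx x0S zS t by (intro convexD) auto
    have px: "p - x0 = t *\<^sub>R (z - x0)" by (simp add: p_def algebra_simps)
    have np: "norm (p - x0) = t * norm (z - x0)" using t by (simp add: px)
    have "t \<le> min d dU / (2 * norm (z - x0))" by (simp add: t_def)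
    then have "t * norm (z - x0) \<le> min d dU / (2 * norm (z - x0)) * norm (z - x0)"
      using nz by (intro mult_right_mono) auto
    also have "\<dots> = min d dU / 2" using nz by simp
    finally have "t * norm (z - x0) \<le> min d dU / 2" .
    then have np2: "norm (p - x0) < d" "norm (p - x0) < dU" using np d dU by (auto simp: min_def split: if_splits)
    have gp: "g p \<le> 0" using gS[OF np2(2) pS] .
    have "g p - g x0 - Gx \<bullet> (p - x0) \<ge> - (e * norm (p - x0))" using abs_le_D2[OF d(2)[rule_format, OF np2(1)]] by linarith
    moreover have "Gx \<bullet> (p - x0) = t * (Gx \<bullet> (z - x0))" by (simp add: px)
    ultimately have "g p \<ge> t * (Gx \<bullet> (z - x0)) - e * (t * norm (z - x0))" using g0 np by simp
    also have "e * (t * norm (z - x0)) = t * (Gx \<bullet> (z - x0)) / 2" using nz by (simp add: e_def field_simps)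
    finally have "g p \<ge> t * (Gx \<bullet> (z - x0)) / 2" by simp
    moreover have "t * (Gx \<bullet> (z - x0)) > 0" using t k by simp
    ultimately show False using gp by simp
  qed
  have H: "v \<bullet> h \<le> 0" if v: "\<forall>z\<in>S. v \<bullet> (z - x0) \<le> 0" and h: "n0 \<bullet> h < 0" for v h
  proof -
    have k: "Gx \<bullet> h < 0" using h nGx by (simp add: n0dot divide_less_0_iff)
    then have "h \<noteq> 0" by auto
    then have nh: "norm h > 0" by simp
    define e where "e = - (Gx \<bullet> h) / (2 * norm h)"
    have e: "e > 0" using k nh by (simp add: e_def divide_neg_pos)
    obtain d where d: "d > 0" "\<forall>y. norm (y - x0) < d \<longrightarrow> \<bar>g y - g x0 - Gx \<bullet> (y - x0)\<bar> \<le> e * norm (y - x0)"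
      using expand[OF e] by auto
    define t where "t = min d dU / (2 * norm h)"
    have t: "t > 0" using d dU nh by (simp add: t_def)
    define p where "p = x0 + t *\<^sub>R h"
    have np: "norm (p - x0) = t * norm h" using t by (simp add: p_def)
    have "t * norm h = min d dU / 2" using nh by (simp add: t_def)
    then have np2: "norm (p - x0) < d" "norm (p - x0) < dU" using np d dU by auto
    have "g p - g x0 - Gx \<bullet> (p - x0) \<le> e * norm (p - x0)" using abs_le_D1[OF d(2)[rule_format, OF np2(1)]] .
    then have "g p \<le> t * (Gx \<bullet> h) + e * (t * norm h)" using g0 np t by (simp add: p_def inner_scaleR_right)
    also have "e * (t * norm h) = - t * (Gx \<bullet> h) / 2" using nh by (simp add: e_def field_simps)
    finally have "g p \<le> t * (Gx \<bullet> h) / 2" by simp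
    also have "\<dots> < 0" using t k by (simp add: mult_pos_neg)
    finally have "p \<in> S" using inS np2 by simp
    then have "v \<bullet> (t *\<^sub>R h) \<le> 0" using v by (metis p_def add_diff_cancel_left')
    then show ?thesis using t by (simp add: mult_le_0_iff)
  qed
  have ON: "outer_normal S x0 = n0"
    unfolding outer_normal_def
  proof (rule the_equality)
    show "norm n0 = 1 \<and> (\<forall>z\<in>S. n0 \<bullet> (z - x0) \<le> 0)" using n0n supp by auto
  next
    fix v assume "norm v = 1 \<and> (\<forall>z\<in>S. v \<bullet> (z - x0) \<le> 0)"
    then show "v = n0" using unit_normal_unique[OF n0n, of v] H by blast
  qed
  then show "norm (outer_normal {z. f z \<le> l} x0) = 1" using n0n by (simp add: S_def)
  fix \<alpha> :: real assume \<alpha>: "\<alpha> > 0"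
  define e where "e = \<alpha> * norm Gx / 2"
  have e: "e > 0" using \<alpha> nGx by (simp add: e_def)
  obtain d where d: "d > 0" "\<forall>y. norm (y - x0) < d \<longrightarrow> \<bar>g y - g x0 - Gx \<bullet> (y - x0)\<bar> \<le> e * norm (y - x0)"
    using expand[OF e] by auto
  define \<delta> where "\<delta> = min d dU / 2"
  have \<delta>: "\<delta> > 0" using d dU by (simp add: \<delta>_def)
  have weak: "f (x0 + v) \<le> l" if v: "0 < norm v" "norm v \<le> \<delta>" "n0 \<bullet> v \<le> - \<alpha> * norm v" for v
  proof -
    have nv: "norm (x0 + v - x0) < d" "norm (x0 + v - x0) < dU" using v d dU by (auto simp: \<delta>_def)
    have "Gx \<bullet> v \<le> - \<alpha> * norm v * norm Gx" using v(3) nGx by (simp add: n0dot pos_divide_le_eq)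
    moreover have "g (x0 + v) - g x0 - Gx \<bullet> v \<le> e * norm v" using abs_le_D1[OF d(2)[rule_format, OF nv(1)]] by simp
    moreover have "e * norm v = \<alpha> * norm v * norm Gx / 2" by (simp add: e_def)
    ultimately have "g (x0 + v) \<le> - \<alpha> * norm v * norm Gx / 2" using g0 by simp
    also have "\<dots> \<le> 0" using \<alpha> nGx v by (simp add: mult_nonneg_nonneg)
    finally have "x0 + v \<in> S" using inS nv by simp
    then show ?thesis by (simp add: S_def)
  qed
  show "\<exists>\<delta>>0. \<forall>v. 0 < norm v \<longrightarrow> norm v \<le> \<delta> \<longrightarrow>
            outer_normal {z. f z \<le> l} x0 \<bullet> v \<le> - \<alpha> * norm v \<longrightarrow> f (x0 + v) < l"
  proof (intro exI[of _ "\<delta>/2"] conjI allI impI)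
    show "\<delta>/2 > 0" using \<delta> by simp
    fix v assume v: "0 < norm v" "norm v \<le> \<delta>/2" "outer_normal {z. f z \<le> l} x0 \<bullet> v \<le> - \<alpha> * norm v"
    then have v3: "n0 \<bullet> v \<le> - \<alpha> * norm v" using ON by (simp add: S_def)
    have w2: "f (x0 + 2 *\<^sub>R v) \<le> l"
      using v v3 by (intro weak) (auto simp: inner_scaleR_right)
    have "x0 \<noteq> x0 + 2 *\<^sub>R v" using v by auto
    then have "f ((1 - 1/2) *\<^sub>R x0 + (1/2) *\<^sub>R (x0 + 2 *\<^sub>R v)) < max (f x0) (f (x0 + 2 *\<^sub>R v))"
      by (intro qc) auto
    moreover have "(1 - 1/2) *\<^sub>R x0 + (1/2) *\<^sub>R (x0 + 2 *\<^sub>R v) = x0 + v" by (simp add: algebra_simps scaleR_left_distrib[symmetric])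
    ultimately show "f (x0 + v) < l" using w2 x0 by auto
  qed
qed

lemma cont_arg1:
  assumes "continuous_on UNIV (\<lambda>(x, y). c x y)"
  shows "continuous_on UNIV (\<lambda>z. c z y)"
proof -
  have "continuous_on UNIV (\<lambda>z. (\<lambda>(x, y). c x y) (z, y))"
    by (rule continuous_on_compose2[OF assms]) (auto intro!: continuous_intros)
  then show ?thesis by simp
qed

lemma cont_arg2:
  assumes "continuous_on UNIV (\<lambda>(x, y). c x y)"
  shows "continuous_on UNIV (\<lambda>z. c x z)"
proof -
  have "continuous_on UNIV (\<lambda>z. (\<lambda>(x, y). c x y) (x, z))"
    by (rule continuous_on_compose2[OF assms]) (auto intro!: continuous_intros)
  then show ?thesis by simp
qed

lemma exists_below:
  fixes c :: "'a \<Rightarrow> 'b \<Rightarrow> real"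
  assumes nn: "\<And>x y. c x y \<ge> 0" and inf: "(INF x. c x y) = 0" and l: "l > 0"
  shows "\<exists>w. c w y < l"
proof -
  have "bdd_below (range (\<lambda>x. c x y))" using nn by (intro bdd_belowI[of _ 0]) auto
  then show ?thesis using cINF_less_iff[of UNIV "\<lambda>x. c x y" l] inf l by auto
qed

locale costc =
  fixes c :: "'a::euclidean_space \<Rightarrow> 'a \<Rightarrow> real"
  assumes c_cont: "continuous_on UNIV (\<lambda>(x, y). c x y)"
    and c_nonneg: "\<And>x y. c x y \<ge> 0"
    and c_i1: "\<And>x. \<exists>!y. c x y = 0"
    and c_i2: "\<And>y. (INF x. c x y) = 0"
    and c_ii: "\<And>y x x' t. x \<noteq> x' \<Longrightarrow> 0 < t \<Longrightarrow> t < 1 \<Longrightarrow>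
                 c ((1 - t) *\<^sub>R x + t *\<^sub>R x') y < max (c x y) (c x' y)"
    and c_iii: "\<And>l y. l > 0 \<Longrightarrow> C1_boundary (sublevel c y l)"
    and c_iv: "\<And>x y y' l. l > 0 \<Longrightarrow> c x y = l \<Longrightarrow> c x y' = l \<Longrightarrow>
                 outer_normal (sublevel c y l) x = outer_normal (sublevel c y' l) x \<Longrightarrow> y = y'"
begin

lemma nf:
  assumes l: "l > 0" and x0: "c x0 y = l"
  shows "norm (outer_normal (sublevel c y l) x0) = 1"
    and "\<And>\<alpha>. \<alpha> > 0 \<Longrightarrow> \<exists>\<delta>>0. \<forall>v. 0 < norm v \<longrightarrow> norm v \<le> \<delta> \<longrightarrow>
            outer_normal (sublevel c y l) x0 \<bullet> v \<le> - \<alpha> * norm v \<longrightarrow> c (x0 + v) y < l"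
proof -
  obtain w where w: "c w y < l" using exists_below[of c, OF c_nonneg c_i2[of y] l] by blast
  have C1: "C1_boundary {z. c z y \<le> l}" using c_iii[OF l, of y] by (simp add: sublevel_def)
  note N = normal_cone[of "\<lambda>z. c z y", OF c_ii cont_arg1[OF c_cont] C1 w x0]
  show "norm (outer_normal (sublevel c y l) x0) = 1" using N(1) by (simp add: sublevel_def)
  fix \<alpha> :: real assume "\<alpha> > 0"
  then show "\<exists>\<delta>>0. \<forall>v. 0 < norm v \<longrightarrow> norm v \<le> \<delta> \<longrightarrow>
            outer_normal (sublevel c y l) x0 \<bullet> v \<le> - \<alpha> * norm v \<longrightarrow> c (x0 + v) y < l"
    using N(2)[of \<alpha>] by (simp add: sublevel_def)
qed

end

context costc begin

lemma mono_inst: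
  assumes "inf_monotone_set c G" "(x, y) \<in> G" "(x', y') \<in> G"
  shows "max (c x y) (c x' y') \<le> max (c x y') (c x' y)"
  using assms unfolding inf_monotone_set_def by blast

lemma decomp:
  fixes n u x0 x' :: 'a
  assumes "norm n = 1" "dist x' (x0 + (\<rho>/2) *\<^sub>R u) < s"
  shows "n \<bullet> (x' - x0) \<le> (\<rho>/2) * (n \<bullet> u) + s" "n \<bullet> (x' - x0) \<ge> (\<rho>/2) * (n \<bullet> u) - s"
    "norm (x' - x0) \<le> \<bar>\<rho>/2\<bar> * norm u + s"
proof -
  define w where "w = x' - (x0 + (\<rho>/2) *\<^sub>R u)"
  have nw: "norm w < s" using assms(2) by (simp add: w_def dist_norm)
  have veq: "x' - x0 = (\<rho>/2) *\<^sub>R u + w" by (simp add: w_def)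
  have "\<bar>n \<bullet> w\<bar> \<le> norm n * norm w" by (rule Cauchy_Schwarz_ineq2)
  then have nw2: "\<bar>n \<bullet> w\<bar> \<le> norm w" using assms(1) by simp
  show "n \<bullet> (x' - x0) \<le> (\<rho>/2) * (n \<bullet> u) + s" "n \<bullet> (x' - x0) \<ge> (\<rho>/2) * (n \<bullet> u) - s"
    using nw nw2 by (auto simp: veq inner_add_right)
  have "norm (x' - x0) \<le> norm ((\<rho>/2) *\<^sub>R u) + norm w" unfolding veq by (rule norm_triangle_ineq)
  then show "norm (x' - x0) \<le> \<bar>\<rho>/2\<bar> * norm u + s" using nw by simp
qed

lemma geoA:
  assumes mono: "inf_monotone_set c G" and in1: "(x0, y1) \<in> G" and lt: "c x0 y2 < c x0 y1"
  shows "\<exists>r0>0. \<exists>s>0. \<exists>\<rho>1>0. \<exists>u. norm u = 1 \<and> s \<le> 1/2 \<and>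
     (\<forall>\<rho> x' y'. 0 < \<rho> \<longrightarrow> \<rho> < \<rho>1 \<longrightarrow> dist x' (x0 + (\<rho>/2) *\<^sub>R u) < s * \<rho> \<longrightarrow> dist y' y2 < r0 \<longrightarrow> (x', y') \<notin> G)"
proof -
  define l1 where "l1 = c x0 y1"
  have l1: "l1 > 0" using lt c_nonneg[of x0 y2] by (simp add: l1_def)
  define n1 where "n1 = outer_normal (sublevel c y1 l1) x0"
  have n1: "norm n1 = 1" using nf(1)[OF l1] by (simp add: n1_def l1_def)
  obtain \<delta>1 where \<delta>1: "\<delta>1 > 0" and cone1: "\<And>v. 0 < norm v \<Longrightarrow> norm v \<le> \<delta>1 \<Longrightarrow> n1 \<bullet> v \<le> - (1/4) * norm v \<Longrightarrow> c (x0 + v) y1 < l1"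
    using nf(2)[OF l1 l1_def[symmetric], of "1/4"] unfolding n1_def by auto
  have "continuous_on UNIV (\<lambda>z. c x0 z)" by (rule cont_arg2[OF c_cont])
  then obtain r0 where r0: "r0 > 0" and r0c: "\<And>y'. dist y' y2 < r0 \<Longrightarrow> dist (c x0 y') (c x0 y2) < l1 - c x0 y2"
    using lt unfolding continuous_on_iff l1_def by (metis UNIV_I diff_gt_0_iff_gt)
  have main: "\<forall>\<rho> x' y'. 0 < \<rho> \<longrightarrow> \<rho> < \<delta>1 \<longrightarrow> dist x' (x0 + (\<rho>/2) *\<^sub>R (- n1)) < 1/4 * \<rho> \<longrightarrow> dist y' y2 < r0 \<longrightarrow> (x', y') \<notin> G"
  proof (intro allI impI)
    fix \<rho> x' y' assume \<rho>: "0 < \<rho>" "\<rho> < \<delta>1" and x': "dist x' (x0 + (\<rho>/2) *\<^sub>R (- n1)) < 1/4 * \<rho>" and y': "dist y' y2 < r0"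
    show "(x', y') \<notin> G"
    proof
      assume G: "(x', y') \<in> G"
      have nn: "n1 \<bullet> n1 = 1" using n1 by (simp add: dot_square_norm)
      note dd = decomp[OF n1 x']
      define v where "v = x' - x0"
      have a: "n1 \<bullet> v \<le> - \<rho>/2 + \<rho>/4" using dd(1) nn by (simp add: v_def)
      have b: "norm v \<le> \<rho>/2 + \<rho>/4" using dd(3) n1 \<rho> by (simp add: v_def)
      have "v \<noteq> 0" using a \<rho> by auto
      then have "c (x0 + v) y1 < l1" using a b \<rho> by (intro cone1) auto
      then have c1: "c x' y1 < l1" by (simp add: v_def)
      have c2: "c x0 y' < l1" using r0c[OF y'] by (simp add: dist_real_def)
      have "max (c x0 y1) (c x' y') \<le> max (c x0 y') (c x' y1)" by (rule mono_inst[OF mono in1 G])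
      then show False using c1 c2 by (auto simp: l1_def max_def split: if_splits)
    qed
  qed
  have nn1: "norm (- n1) = 1" using n1 by simp
  show ?thesis
    apply (rule exI[of _ r0], rule conjI, rule r0)
    apply (rule exI[of _ "1/4"], rule conjI, simp)
    apply (rule exI[of _ \<delta>1], rule conjI, rule \<delta>1)
    apply (rule exI[of _ "- n1"])
    using main nn1 by simp
qed

lemma geoB:
  assumes mono: "inf_monotone_set c G" and in1: "(x0, y1) \<in> G" and in2: "(x0, y2) \<in> G"
    and ne: "y1 \<noteq> y2" and eq: "c x0 y2 = c x0 y1"
  shows "\<exists>r0>0. \<exists>s>0. \<exists>\<rho>1>0. \<exists>u. norm u = 1 \<and> s \<le> 1/2 \<and>
     (\<forall>\<rho> x' y'. 0 < \<rho> \<longrightarrow> \<rho> < \<rho>1 \<longrightarrow> dist x' (x0 + (\<rho>/2) *\<^sub>R u) < s * \<rho> \<longrightarrow> dist y' y2 < r0 \<longrightarrow> (x', y') \<notin> G)"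
proof -
  define l where "l = c x0 y1"
  have l: "l > 0"
  proof (rule ccontr)
    assume "\<not> l > 0"
    then have "c x0 y1 = 0" "c x0 y2 = 0" using c_nonneg[of x0 y1] eq by (auto simp: l_def)
    then show False using c_i1[of x0] ne by blast
  qed
  have l2: "c x0 y2 = l" using eq by (simp add: l_def)
  define n1 where "n1 = outer_normal (sublevel c y1 l) x0"
  define n2 where "n2 = outer_normal (sublevel c y2 l) x0"
  have n1: "norm n1 = 1" using nf(1)[OF l] by (simp add: n1_def l_def)
  have n2: "norm n2 = 1" using nf(1)[OF l l2] by (simp add: n2_def)
  have n12: "n1 \<noteq> n2" using c_iv[OF l l_def[symmetric] l2] ne by (auto simp: n1_def n2_def)
  have nn1: "n1 \<bullet> n1 = 1" using n1 by (simp add: dot_square_norm)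
  have nn2: "n2 \<bullet> n2 = 1" using n2 by (simp add: dot_square_norm)
  define \<beta> where "\<beta> = 1 - n1 \<bullet> n2"
  define nv where "nv = norm (n2 - n1)"
  have nvpos: "nv > 0" using n12 by (simp add: nv_def)
  have nvsq: "nv * nv = 2 * \<beta>"
  proof -
    have "nv * nv = (n2 - n1) \<bullet> (n2 - n1)" by (simp add: nv_def dot_square_norm power2_eq_square)
    also have "\<dots> = 2 * \<beta>" using nn1 nn2 by (simp add: \<beta>_def inner_diff_left inner_diff_right inner_commute)
    finally show ?thesis .
  qed
  define u where "u = (1 / nv) *\<^sub>R (n2 - n1)"
  define a where "a = \<beta> / nv"
  have u: "norm u = 1" using nvpos by (simp add: u_def nv_def)
  have n1u: "n1 \<bullet> u = - a" using nvpos nn1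
    by (simp add: u_def a_def \<beta>_def inner_diff_right field_simps)
  have n2u: "n2 \<bullet> u = a" using nvpos nn2
    by (simp add: u_def a_def \<beta>_def inner_diff_right inner_commute field_simps)
  have \<beta>pos: "\<beta> > 0" using nvsq nvpos by (smt (verit) mult_pos_pos)
  have apos: "a > 0" using \<beta>pos nvpos by (simp add: a_def)
  have ale1: "a \<le> 1"
  proof -
    have "\<bar>n1 \<bullet> u\<bar> \<le> norm n1 * norm u" by (rule Cauchy_Schwarz_ineq2)
    then show ?thesis using n1 u n1u by simp
  qed
  obtain \<delta>1 where \<delta>1: "\<delta>1 > 0" and cone1: "\<And>v. 0 < norm v \<Longrightarrow> norm v \<le> \<delta>1 \<Longrightarrow> n1 \<bullet> v \<le> - (a/4) * norm v \<Longrightarrow> c (x0 + v) y1 < l"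
    using nf(2)[OF l l_def[symmetric], of "a/4"] apos unfolding n1_def by auto
  obtain \<delta>2 where \<delta>2: "\<delta>2 > 0" and cone2: "\<And>v. 0 < norm v \<Longrightarrow> norm v \<le> \<delta>2 \<Longrightarrow> n2 \<bullet> v \<le> - (a/4) * norm v \<Longrightarrow> c (x0 + v) y2 < l"
    using nf(2)[OF l l2, of "a/4"] apos unfolding n2_def by auto
  define P where "P = {p. norm p = \<delta>2 \<and> n2 \<bullet> p + (a/4) * norm p \<le> 0}"
  have Pc: "compact P"
  proof -
    have "closed P" unfolding P_def
      by (intro closed_Collect_conj closed_Collect_eq closed_Collect_le continuous_intros)
    moreover have "bounded P" unfolding P_def by (rule boundedI[of _ \<delta>2]) auto
    ultimately show ?thesis by (simp add: compact_eq_bounded_closed)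
  qed
  have Pne: "- \<delta>2 *\<^sub>R n2 \<in> P" using \<delta>2 n2 nn2 ale1 apos by (simp add: P_def)
  have Pl: "c (x0 + p) y2 < l" if "p \<in> P" for p
    using that \<delta>2 by (intro cone2) (auto simp: P_def)
  have "continuous_on P (\<lambda>p. c (x0 + p) y2)"
    by (rule continuous_on_compose2[OF cont_arg1[OF c_cont]]) (auto intro!: continuous_intros)
  then obtain pm where pm: "pm \<in> P" and pmax: "\<And>p. p \<in> P \<Longrightarrow> c (x0 + p) y2 \<le> c (x0 + pm) y2"
    using continuous_attains_sup[OF Pc] Pne by blast
  define \<eta> where "\<eta> = l - c (x0 + pm) y2"
  have \<eta>: "\<eta> > 0" using Pl[OF pm] by (simp add: \<eta>_def)
  have Pl2: "c (x0 + p) y2 \<le> l - \<eta>" if "p \<in> P" for p using pmax[OF that] by (simp add: \<eta>_def)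
  define K where "K = cball x0 \<delta>2 \<times> cball y2 (1::real)"
  have "uniformly_continuous_on K (\<lambda>(x, y). c x y)"
    by (rule compact_uniformly_continuous)
       (auto intro: continuous_on_subset[OF c_cont] simp: K_def compact_Times)
  then obtain d where d: "d > 0" and dK: "\<And>z z'. z \<in> K \<Longrightarrow> z' \<in> K \<Longrightarrow> dist z' z < d \<Longrightarrow>
      dist ((\<lambda>(x, y). c x y) z') ((\<lambda>(x, y). c x y) z) < \<eta>/3"
    unfolding uniformly_continuous_on_def using \<eta> by (metis zero_less_divide_iff zero_less_numeral)
  define r0 where "r0 = min d 1"
  have r0: "r0 > 0" using d by (simp add: r0_def)
  have close: "c (x0 + p) y' < c x0 y'" if p: "p \<in> P" and y': "dist y' y2 < r0" for p y'
  proof -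
    have y'K: "y' \<in> cball y2 1" "y2 \<in> cball y2 1" using y' by (auto simp: r0_def dist_commute)
    have x0K: "x0 \<in> cball x0 \<delta>2" using \<delta>2 by simp
    have pK: "x0 + p \<in> cball x0 \<delta>2" using p by (simp add: P_def dist_norm)
    have dy: "dist y' y2 < d" using y' by (simp add: r0_def)
    have "dist (c x0 y') (c x0 y2) < \<eta>/3"
      using dK[of "(x0, y2)" "(x0, y')"] y'K x0K dy by (simp add: K_def dist_prod_def)
    moreover have "dist (c (x0 + p) y') (c (x0 + p) y2) < \<eta>/3"
      using dK[of "(x0 + p, y2)" "(x0 + p, y')"] y'K pK dy by (simp add: K_def dist_prod_def)
    moreover have "c (x0 + p) y2 \<le> l - \<eta>" by (rule Pl2[OF p])
    ultimately show ?thesis using l2 unfolding dist_real_def abs_less_iff by linarith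
  qed
  have main: "\<forall>\<rho> x' y'. 0 < \<rho> \<longrightarrow> \<rho> < \<delta>1 \<longrightarrow> dist x' (x0 + (\<rho>/2) *\<^sub>R u) < (a/4) * \<rho> \<longrightarrow> dist y' y2 < r0 \<longrightarrow> (x', y') \<notin> G"
  proof (intro allI impI)
    fix \<rho> x' y' assume \<rho>: "0 < \<rho>" "\<rho> < \<delta>1" and x': "dist x' (x0 + (\<rho>/2) *\<^sub>R u) < (a/4) * \<rho>" and y': "dist y' y2 < r0"
    show "(x', y') \<notin> G"
    proof
      assume G: "(x', y') \<in> G"
      define v where "v = x' - x0"
      have x'eq: "x' = x0 + v" by (simp add: v_def)
      have d1: "n1 \<bullet> v \<le> - (\<rho>/2) * a + (a/4) * \<rho>" using decomp(1)[OF n1 x'] unfolding n1u v_def by simp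
      have d2: "n2 \<bullet> v \<ge> (\<rho>/2) * a - (a/4) * \<rho>" using decomp(2)[OF n2 x'] unfolding n2u v_def by simp
      have d3: "norm v \<le> \<rho>/2 + (a/4) * \<rho>" using decomp(3)[OF n1 x'] u \<rho> by (simp add: v_def)
      have "(a/4) * \<rho> \<le> (1/4) * \<rho>" using ale1 \<rho> by (intro mult_right_mono) auto
      then have nvr: "norm v < \<rho>" using d3 \<rho> by linarith
      have arho: "a * norm v \<le> a * \<rho>" using nvr apos by (intro mult_left_mono) auto
      have e1: "- (\<rho>/2) * a + (a/4) * \<rho> = - ((a/4) * \<rho>)" by (simp add: field_simps)
      have e2: "(a/4) * norm v = (a * norm v) / 4" "(a/4) * \<rho> = (a * \<rho>) / 4" by simp_all
      have arpos: "a * \<rho> > 0" using apos \<rho> by simp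
      have n1v: "n1 \<bullet> v \<le> - ((a/4) * \<rho>)" using d1 unfolding e1 .
      have vnz: "0 < norm v"
      proof -
        have "n1 \<bullet> v < 0" using n1v e2 arpos by linarith
        then show ?thesis by auto
      qed
      have n1v2: "n1 \<bullet> v \<le> - (a/4) * norm v" using n1v e2 arho by linarith
      have "norm v \<le> \<delta>1" using nvr \<rho> by linarith
      then have "c (x0 + v) y1 < l" using cone1[OF vnz _ n1v2] by blast
      then have c1: "c x' y1 < l" by (simp add: x'eq)
      have "max (c x0 y1) (c x' y') \<le> max (c x0 y') (c x' y1)" by (rule mono_inst[OF mono in1 G])
      then have m: "l \<le> max (c x0 y') (c x' y1)" "c x' y' \<le> max (c x0 y') (c x' y1)"
        by (simp_all add: l_def)
      have "max (c x0 y') (c x' y1) = c x0 y'" using m(1) c1 by (simp add: max_def split: if_splits)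
      then have le: "c x' y' \<le> c x0 y'" using m(2) by simp
      define p where "p = (- (\<delta>2 / norm v)) *\<^sub>R v"
      have np: "norm p = \<delta>2" using vnz \<delta>2 by (simp add: p_def)
      have e3: "(\<rho>/2) * a - (a/4) * \<rho> = (a * \<rho>) / 4" by (simp add: field_simps)
      have n2v: "n2 \<bullet> v \<ge> (a/4) * norm v" using d2 arho e2(1) unfolding e3 by linarith
      have "(\<delta>2 / norm v) * ((a/4) * norm v) \<le> (\<delta>2 / norm v) * (n2 \<bullet> v)"
        using n2v \<delta>2 vnz by (intro mult_left_mono) auto
      moreover have "(\<delta>2 / norm v) * ((a/4) * norm v) = (a/4) * \<delta>2" using vnz by simp
      ultimately have "n2 \<bullet> p + (a/4) * norm p \<le> 0" using np by (simp add: p_def)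
      then have pP: "p \<in> P" using np by (simp add: P_def)
      have cp: "c (x0 + p) y' < c x0 y'" by (rule close[OF pP y'])
      define t where "t = norm v / (norm v + \<delta>2)"
      have t: "0 < t" "t < 1"
      proof -
        have pos: "norm v + \<delta>2 > 0" using vnz \<delta>2 by linarith
        show "0 < t" unfolding t_def using vnz pos by (rule divide_pos_pos)
        show "t < 1" unfolding t_def using pos \<delta>2 by (simp add: divide_less_eq)
      qed
      have pos2: "norm v + \<delta>2 \<noteq> 0" "\<delta>2 + norm v \<noteq> 0" using vnz \<delta>2 by linarith+
      have coef: "(1 - t) - t * (\<delta>2 / norm v) = 0" using vnz pos2 by (simp add: t_def field_simps)
      have tp: "t *\<^sub>R p = (- (t * (\<delta>2 / norm v))) *\<^sub>R v" by (simp add: p_def)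
      have "(1 - t) *\<^sub>R x' + t *\<^sub>R (x0 + p) = ((1 - t) + t) *\<^sub>R x0 + ((1 - t) *\<^sub>R v + t *\<^sub>R p)"
        unfolding x'eq scaleR_add_right scaleR_add_left by (simp only: add.assoc add.left_commute)
      also have "\<dots> = x0 + ((1 - t) *\<^sub>R v + (- (t * (\<delta>2 / norm v))) *\<^sub>R v)" by (simp only: tp) simp
      also have "\<dots> = x0 + ((1 - t) - t * (\<delta>2 / norm v)) *\<^sub>R v"
        by (simp only: diff_conv_add_uminus scaleR_add_left)
      also have "\<dots> = x0" unfolding coef by simp
      finally have comb: "(1 - t) *\<^sub>R x' + t *\<^sub>R (x0 + p) = x0" .
      have neq: "x' \<noteq> x0 + p"
      proof
        assume "x' = x0 + p"
        then have "v = p" by (simp add: x'eq)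
        then have "v = - ((\<delta>2 / norm v) *\<^sub>R v)" by (simp add: p_def)
        then have "v + (\<delta>2 / norm v) *\<^sub>R v = 0" by (simp only: eq_neg_iff_add_eq_0)
        then have "(1 + \<delta>2 / norm v) *\<^sub>R v = 0" by (simp add: scaleR_add_left)
        moreover have "1 + \<delta>2 / norm v \<noteq> 0" using vnz \<delta>2 by (smt (verit) divide_pos_pos)
        ultimately show False using vnz by simp
      qed
      have "c ((1 - t) *\<^sub>R x' + t *\<^sub>R (x0 + p)) y' < max (c x' y') (c (x0 + p) y')"
        by (rule c_ii[OF neq t])
      then have "c x0 y' < max (c x' y') (c (x0 + p) y')" by (simp only: comb)
      then show False using le cp by (simp add: max_def split: if_splits)
    qed
  qed
  have s1: "a/4 > 0" "a/4 \<le> 1/2" using apos ale1 by auto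
  show ?thesis
    apply (rule exI[of _ r0], rule conjI, rule r0)
    apply (rule exI[of _ "a/4"], rule conjI, rule s1(1))
    apply (rule exI[of _ \<delta>1], rule conjI, rule \<delta>1)
    apply (rule exI[of _ u])
    using main u s1 by simp
qed

end

definition bad :: "'a::euclidean_space set \<Rightarrow> real \<Rightarrow> 'a \<Rightarrow> bool" where
  "bad E s x \<longleftrightarrow> (\<forall>\<rho>0>0. \<exists>\<rho>. 0 < \<rho> \<and> \<rho> < \<rho>0 \<and> (\<exists>z. ball z (s * \<rho>) \<subseteq> ball x \<rho> \<and> ball z (s * \<rho>) \<inter> E = {}))"

lemma density_neg:
  fixes E :: "'a::euclidean_space set"
  assumes E: "E \<in> sets lebesgue" and s: "0 < s"
  shows "negligible {x \<in> E. bad E s x}"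
proof -
  define S where "S = {x \<in> E. bad E s x}"
  define \<theta> where "\<theta> = s ^ DIM('a)"
  have \<theta>: "\<theta> > 0" using s by (simp add: \<theta>_def)
  have "\<exists>T. S \<subseteq> T \<and> T \<in> lmeasurable \<and> measure lebesgue T \<le> e" if e: "e > 0" for e
  proof -
    have e\<theta>: "e * \<theta> > 0" using e \<theta> by simp
    obtain U where U: "open U" "E \<subseteq> U" "(U - E) \<in> lmeasurable" and UE: "emeasure lebesgue (U - E) < ennreal (e * \<theta>)"
      using sets_lebesgue_outer_open[OF E e\<theta>] by blast
    have mUE: "measure lebesgue (U - E) < e * \<theta>"
      using UE emeasure_eq_measure2[OF U(3)] by (simp add: ennreal_less_iff)
    define K where "K = {(x, \<rho>). x \<in> S \<and> 0 < \<rho> \<and> ball x \<rho> \<subseteq> U \<and> (\<exists>z. ball z (s * \<rho>) \<subseteq> ball x \<rho> \<and> ball z (s * \<rho>) \<inter> E = {})}"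
    have cov: "\<exists>i. i \<in> K \<and> x \<in> ball (fst i) (snd i) \<and> snd i < d" if x: "x \<in> S" and d: "0 < d" for x d
    proof -
      have xU: "x \<in> U" using x U(2) by (auto simp: S_def)
      obtain r1 where r1: "r1 > 0" "ball x r1 \<subseteq> U" using U(1) xU by (meson openE)
      have "bad E s x" using x by (simp add: S_def)
      moreover have "min d r1 > 0" using d r1 by simp
      ultimately obtain \<rho> z where \<rho>: "0 < \<rho>" "\<rho> < min d r1" and z: "ball z (s * \<rho>) \<subseteq> ball x \<rho>" "ball z (s * \<rho>) \<inter> E = {}"
        unfolding bad_def by blast
      have "ball x \<rho> \<subseteq> ball x r1" using \<rho> by (intro subset_ball) simp
      then have "(x, \<rho>) \<in> K" using x \<rho> z r1 by (auto simp: K_def)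
      then show ?thesis using \<rho> by (intro exI[of _ "(x, \<rho>)"]) auto
    qed
    obtain C where C: "countable C" "C \<subseteq> K"
      and pw: "pairwise (\<lambda>i j. disjnt (ball (fst i) (snd i)) (ball (fst j) (snd j))) C"
      and neg: "negligible (S - (\<Union>i\<in>C. ball (fst i) (snd i)))"
      using Vitali_covering_theorem_balls[of S K fst snd, OF cov] by blast
    have "\<forall>i\<in>C. \<exists>z. ball z (s * snd i) \<subseteq> ball (fst i) (snd i) \<and> ball z (s * snd i) \<inter> E = {}"
    proof
      fix i assume "i \<in> C"
      obtain a b where i: "i = (a, b)" by force
      then have "(a, b) \<in> K" using \<open>i \<in> C\<close> C(2) by auto
      then show "\<exists>z. ball z (s * snd i) \<subseteq> ball (fst i) (snd i) \<and> ball z (s * snd i) \<inter> E = {}"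
        by (simp add: K_def i)
    qed
    then obtain zf where zf: "\<And>i. i \<in> C \<Longrightarrow> ball (zf i) (s * snd i) \<subseteq> ball (fst i) (snd i) \<and> ball (zf i) (s * snd i) \<inter> E = {}"
      by metis
    define B where "B = (\<lambda>i::'a \<times> real. ball (fst i) (snd i))"
    define Z where "Z = (\<lambda>i::'a \<times> real. ball (zf i) (s * snd i))"
    have pos: "snd i > 0" if "i \<in> C" for i using that C(2) by (cases i) (auto simp: K_def)
    have BU: "B i \<subseteq> U" if "i \<in> C" for i
    proof -
      obtain a b where i: "i = (a, b)" by force
      then have "(a, b) \<in> K" using that C(2) by auto
      then show ?thesis by (simp add: K_def B_def i)
    qed
    have ZUE: "Z i \<subseteq> U - E" if "i \<in> C" for i using zf[OF that] BU[OF that] by (auto simp: Z_def B_def)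
    have ZB: "Z i \<subseteq> B i" if "i \<in> C" for i using zf[OF that] by (auto simp: Z_def B_def)
    have mZ: "measure lebesgue (Z i) = \<theta> * measure lebesgue (B i)" if "i \<in> C" for i
    proof -
      have "measure lebesgue (Z i) = (s * snd i) ^ DIM('a) * measure lborel (ball (0::'a) 1)"
        unfolding Z_def using s pos[OF that] content_ball_conv_unit_ball[of "s * snd i" "zf i"] by simp
      moreover have "measure lebesgue (B i) = (snd i) ^ DIM('a) * measure lborel (ball (0::'a) 1)"
        unfolding B_def using pos[OF that] content_ball_conv_unit_ball[of "snd i" "fst i"] by simp
      ultimately show ?thesis by (simp add: \<theta>_def power_mult_distrib)
    qed
    have bound: "measure lebesgue (\<Union>i\<in>I. B i) \<le> e" if I: "I \<subseteq> C" "finite I" for I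
    proof -
      have pwI: "pairwise (\<lambda>i j. disjnt (B i) (B j)) I" using pairwise_subset[OF pw I(1)] by (simp add: B_def)
      have pwZ: "pairwise (\<lambda>i j. disjnt (Z i) (Z j)) I"
        unfolding pairwise_def
      proof (intro ballI impI)
        fix i j assume ij: "i \<in> I" "j \<in> I" "i \<noteq> j"
        then have "disjnt (B i) (B j)" using pwI unfolding pairwise_def by blast
        moreover have "Z i \<subseteq> B i" "Z j \<subseteq> B j" using ZB ij I(1) by blast+
        ultimately show "disjnt (Z i) (Z j)" by (meson disjnt_subset1 disjnt_subset2)
      qed
      have "measure lebesgue (\<Union>i\<in>I. B i) = (\<Sum>i\<in>I. measure lebesgue (B i))"
        by (rule measure_UNION'[OF I(2) _ pwI]) (simp add: B_def)
      also have "\<dots> = (\<Sum>i\<in>I. measure lebesgue (Z i)) / \<theta>"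
      proof -
        have "(\<Sum>i\<in>I. measure lebesgue (Z i)) = (\<Sum>i\<in>I. \<theta> * measure lebesgue (B i))"
          using mZ I(1) by (intro sum.cong) auto
        also have "\<dots> = \<theta> * (\<Sum>i\<in>I. measure lebesgue (B i))" by (rule sum_distrib_left[symmetric])
        finally show ?thesis using \<theta> by simp
      qed
      also have "(\<Sum>i\<in>I. measure lebesgue (Z i)) = measure lebesgue (\<Union>i\<in>I. Z i)"
        by (rule measure_UNION'[OF I(2) _ pwZ, symmetric]) (simp add: Z_def)
      also have "measure lebesgue (\<Union>i\<in>I. Z i) \<le> measure lebesgue (U - E)"
      proof (rule measure_mono_fmeasurable)
        show "(\<Union>i\<in>I. Z i) \<subseteq> U - E" using ZUE I(1) by blast
        show "(\<Union>i\<in>I. Z i) \<in> sets lebesgue" using I(2)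
          by (intro sets.finite_UN) (auto simp: Z_def intro: fmeasurableD)
        show "U - E \<in> lmeasurable" by (rule U(3))
      qed
      finally have "measure lebesgue (\<Union>i\<in>I. B i) \<le> measure lebesgue (U - E) / \<theta>"
        using \<theta> by (simp add: divide_right_mono)
      also have "\<dots> \<le> e" using mUE \<theta> by (simp add: divide_le_eq)
      finally show ?thesis .
    qed
    have Bm: "(\<Union>i\<in>C. B i) \<in> lmeasurable" "measure lebesgue (\<Union>i\<in>C. B i) \<le> e"
      using fmeasurable_UN_bound[OF C(1) _ bound] measure_UN_bound[OF C(1) _ bound] by (auto simp: B_def)
    define T where "T = (S - (\<Union>i\<in>C. B i)) \<union> (\<Union>i\<in>C. B i)"
    have negB: "negligible (S - (\<Union>i\<in>C. B i))" using neg by (simp add: B_def)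
    have "S \<subseteq> T" by (auto simp: T_def)
    moreover have "T \<in> lmeasurable" unfolding T_def
      using negligible_imp_measurable[OF negB] Bm(1) by (rule fmeasurable.Un)
    moreover have "measure lebesgue T \<le> e"
    proof -
      have "measure lebesgue T \<le> measure lebesgue (S - (\<Union>i\<in>C. B i)) + measure lebesgue (\<Union>i\<in>C. B i)"
        unfolding T_def using negligible_imp_measurable[OF negB] Bm(1)
        by (intro measure_Un_le) (auto simp: fmeasurable_def)
      then show ?thesis using negligible_imp_measure0[OF negB] Bm(2) by simp
    qed
    ultimately show ?thesis by blast
  qed
  then show ?thesis unfolding S_def[symmetric] by (simp add: negligible_outer_le)
qed

context costc begin
lemma geo:
  assumes mono: "inf_monotone_set c G" and in1: "(x0, y1) \<in> G" and in2: "(x0, y2) \<in> G" and ne: "y1 \<noteq> y2"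
  shows "\<exists>yb. (x0, yb) \<in> G \<and> (\<exists>r0>0. \<exists>s>0. \<exists>\<rho>1>0. \<exists>u. norm u = 1 \<and> s \<le> 1/2 \<and>
     (\<forall>\<rho> x' y'. 0 < \<rho> \<longrightarrow> \<rho> < \<rho>1 \<longrightarrow> dist x' (x0 + (\<rho>/2) *\<^sub>R u) < s * \<rho> \<longrightarrow> dist y' yb < r0 \<longrightarrow> (x', y') \<notin> G))"
proof (cases "c x0 y2 < c x0 y1")
  case True
  show ?thesis by (rule exI[of _ y2], rule conjI[OF in2 geoA[OF mono in1 True]])
next
  case False
  show ?thesis
  proof (cases "c x0 y1 < c x0 y2")
    case True
    show ?thesis by (rule exI[of _ y1], rule conjI[OF in1 geoA[OF mono in2 True]])
  next
    case False
    then have "c x0 y2 = c x0 y1" using \<open>\<not> c x0 y2 < c x0 y1\<close> by simp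
    then show ?thesis by (intro exI[of _ y2] conjI[OF in2 geoB[OF mono in1 in2 ne]])
  qed
qed
end

lemma inner_sigma_compact:
  fixes M :: "'b::{second_countable_topology, complete_space} measure"
  assumes sb: "sets M = sets borel" and fin: "finite_measure M" and B: "B \<in> sets borel"
  shows "\<exists>K::nat \<Rightarrow> 'b set. (\<forall>n. compact (K n) \<and> K n \<subseteq> B) \<and> emeasure M (B - (\<Union>n. K n)) = 0"
proof -
  interpret finite_measure M by (rule fin)
  have BM: "B \<in> sets M" using B sb by simp
  have approx: "\<exists>K. compact K \<and> K \<subseteq> B \<and> t < measure M K" if t: "t < measure M B" for t
  proof (cases "t < 0")
    case True
    then show ?thesis by (intro exI[of _ "{}"]) auto
  next
    case False
    have "ennreal t < ennreal (measure M B)" using t False by (simp add: ennreal_less_iff)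
    also have "\<dots> = emeasure M B" using emeasure_eq_measure[of B] by simp
    also have "\<dots> = (SUP K \<in> {K. K \<subseteq> B \<and> compact K}. emeasure M K)"
      by (rule inner_regular[OF sb _ B]) simp
    finally obtain K where K: "K \<subseteq> B" "compact K" "ennreal t < emeasure M K"
      by (auto simp: less_SUP_iff)
    have "emeasure M K = ennreal (measure M K)" by (rule emeasure_eq_measure)
    then have "t < measure M K" using K(3) False by (simp add: ennreal_less_iff)
    then show ?thesis using K by blast
  qed
  have "\<forall>n. \<exists>K. compact K \<and> K \<subseteq> B \<and> measure M B - 1 / Suc n < measure M K"
  proof
    fix n
    have "measure M B - 1 / Suc n < measure M B" by simp
    then show "\<exists>K. compact K \<and> K \<subseteq> B \<and> measure M B - 1 / Suc n < measure M K" by (rule approx)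
  qed
  from choice[OF this] obtain K where K0: "\<forall>n. compact (K n) \<and> K n \<subseteq> B \<and> measure M B - 1 / Suc n < measure M (K n)"
    by blast
  then have K: "\<And>n. compact (K n)" "\<And>n. K n \<subseteq> B" "\<And>n. measure M B - 1 / Suc n < measure M (K n)"
    by blast+
  have KM: "K n \<in> sets M" for n using compact_imp_closed[OF K(1)] sb by simp
  have UM: "(\<Union>n. K n) \<in> sets M" using KM by auto
  have le: "measure M (B - (\<Union>n. K n)) \<le> 1 / Suc n" for n
  proof -
    have "measure M (B - (\<Union>n. K n)) \<le> measure M (B - K n)"
      using BM KM UM by (intro finite_measure_mono) auto
    also have "\<dots> = measure M B - measure M (K n)"
      using BM KM K(2) by (intro finite_measure_Diff) auto
    also have "\<dots> \<le> 1 / Suc n" using K(3)[of n] by simp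
    finally show ?thesis .
  qed
  have "measure M (B - (\<Union>n. K n)) \<le> 0"
  proof (rule field_le_epsilon)
    fix e :: real assume e: "e > 0"
    obtain n where n: "inverse (real (Suc n)) < e" using reals_Archimedean[OF e] by blast
    have "1 / real (Suc n) < e" using n by (simp only: inverse_eq_divide)
    then show "measure M (B - (\<Union>n. K n)) \<le> 0 + e" using le[of n] by linarith
  qed
  then have "measure M (B - (\<Union>n. K n)) = 0" using measure_nonneg[of M "B - (\<Union>n. K n)"] by linarith
  then have em: "emeasure M (B - (\<Union>n. K n)) = 0" using emeasure_eq_measure[of "B - (\<Union>n. K n)"] by simp
  have kk: "\<forall>n. compact (K n) \<and> K n \<subseteq> B" using K by blast
  show ?thesis by (rule exI[of _ K], rule conjI[OF kk em])
qed

lemma proj_compact: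
  fixes K :: "('a::euclidean_space \<times> 'b::euclidean_space) set"
  assumes "compact K" "closed F"
  shows "compact (fst ` (K \<inter> (UNIV \<times> F)))"
proof -
  have "compact (K \<inter> (UNIV \<times> F))" using assms by (intro compact_Int_closed closed_Times) auto
  then show ?thesis by (intro compact_continuous_image continuous_intros)
qed

lemma proj_borel:
  fixes K :: "nat \<Rightarrow> ('a::euclidean_space \<times> 'b::euclidean_space) set"
  assumes "\<And>n. compact (K n)" "closed F"
  shows "fst ` ((\<Union>n. K n) \<inter> (UNIV \<times> F)) \<in> sets borel"
proof -
  have eq: "fst ` ((\<Union>n. K n) \<inter> (UNIV \<times> F)) = (\<Union>n. fst ` (K n \<inter> (UNIV \<times> F)))" by blast
  show ?thesis unfolding eq
    using proj_compact[OF assms(1) assms(2)] by (intro sets.countable_UN') (auto intro: borel_closed compact_imp_closed)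
qed

theorem theorem2p19:
  fixes \<mu> \<nu> :: "'a::euclidean_space measure"
    and c :: "'a \<Rightarrow> 'a \<Rightarrow> real"
    and \<gamma> :: "('a \<times> 'a) measure"
  assumes mu_borel: "sets \<mu> = sets borel" and mu_prob: "prob_space \<mu>"
    and nu_borel: "sets \<nu> = sets borel" and nu_prob: "prob_space \<nu>"
    and mu_supp: "compact (measure_support \<mu>)"
    and nu_supp: "compact (measure_support \<nu>)"
    and mu_ac: "absolutely_continuous lborel \<mu>"
    and c_cont: "continuous_on UNIV (\<lambda>(x, y). c x y)"
    and c_nonneg: "\<And>x y. c x y \<ge> 0"
    and c_i1: "\<And>x. \<exists>!y. c x y = 0"
    and c_i2: "\<And>y. (INF x. c x y) = 0"
    and c_ii: "\<And>y x x' t. x \<noteq> x' \<Longrightarrow> 0 < t \<Longrightarrow> t < 1 \<Longrightarrow>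
                 c ((1 - t) *\<^sub>R x + t *\<^sub>R x') y < max (c x y) (c x' y)"
    and c_iii: "\<And>l y. l > 0 \<Longrightarrow> C1_boundary (sublevel c y l)"
    and c_iv: "\<And>x y y' l. l > 0 \<Longrightarrow> c x y = l \<Longrightarrow> c x y' = l \<Longrightarrow>
                 outer_normal (sublevel c y l) x = outer_normal (sublevel c y' l) x \<Longrightarrow> y = y'"
    and plan: "\<gamma> \<in> transport_plans \<mu> \<nu>"
    and mono: "inf_monotone_plan c \<gamma>"
  shows "\<exists>T. T \<in> borel_measurable borel \<and>
             (AE p in \<gamma>. snd p = T (fst p)) \<and>
             distr \<mu> borel T = \<nu>"
proof -
  interpret costc c
    by (rule costc.intro) (fact c_cont c_nonneg c_i1 c_i2 c_ii c_iii c_iv)+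
  have gsets: "sets \<gamma> = sets borel" and gprob: "prob_space \<gamma>"
    and mfst: "distr \<gamma> borel fst = \<mu>" and msnd: "distr \<gamma> borel snd = \<nu>"
    using plan by (auto simp: transport_plans_def)
  interpret P: prob_space \<gamma> by (rule gprob)
  have fin: "finite_measure \<gamma>" by (rule P.finite_measure_axioms)
  have spg: "space \<gamma> = UNIV" using sets_eq_imp_space_eq[OF gsets] by simp
  obtain \<Gamma> N where Gam: "inf_monotone_set c \<Gamma>" and N: "N \<in> null_sets \<gamma>" "UNIV - \<Gamma> \<subseteq> N"
    using mono unfolding inf_monotone_plan_def by blast
  have Nb: "N \<in> sets borel" using null_setsD2[OF N(1)] gsets by simp
  have B0: "UNIV - N \<in> sets borel" using Nb by auto
  obtain K :: "nat \<Rightarrow> ('a \<times> 'a) set" where K: "\<forall>n. compact (K n) \<and> K n \<subseteq> UNIV - N"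
    and Kem: "emeasure \<gamma> ((UNIV - N) - (\<Union>n. K n)) = 0"
    using inner_sigma_compact[OF gsets fin B0] by (elim exE conjE)
  define G where "G = (\<Union>n. K n)"
  have Kc: "\<And>n. compact (K n)" using K by blast
  have GGam: "G \<subseteq> \<Gamma>" using K N(2) by (auto simp: G_def)
  have Gmono: "inf_monotone_set c G" using Gam GGam unfolding inf_monotone_set_def by blast
  have Gb: "G \<in> sets borel" unfolding G_def using Kc
    by (intro sets.countable_UN') (auto intro: borel_closed compact_imp_closed)
  have Gnull: "UNIV - G \<in> null_sets \<gamma>"
  proof -
    have "(UNIV - N) - G \<in> null_sets \<gamma>" using Kem B0 Gb gsets by (auto simp: null_sets_def G_def)
    then have "N \<union> ((UNIV - N) - G) \<in> null_sets \<gamma>" using N(1) by (intro null_sets.Un)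
    moreover have "UNIV - G \<in> sets \<gamma>" using Gb gsets by auto
    moreover have "UNIV - G \<subseteq> N \<union> ((UNIV - N) - G)" by blast
    ultimately show ?thesis by (rule null_sets_subset)
  qed
  define Bd where "Bd = {x. \<exists>y1 y2. (x, y1) \<in> G \<and> (x, y2) \<in> G \<and> y1 \<noteq> y2}"
  define P where "P i j k = (\<lambda>p::('a \<times> 'a) \<times> ('a \<times> 'a). fst (fst p)) `
      ((K i \<times> K j) \<inter> {p. fst (fst p) = fst (snd p) \<and> 1 / real (Suc k) \<le> dist (snd (fst p)) (snd (snd p))})" for i j k
  have Pb: "P i j k \<in> sets borel" for i j k
  proof -
    have cl: "closed {p::('a \<times> 'a) \<times> ('a \<times> 'a). fst (fst p) = fst (snd p) \<and> 1 / real (Suc k) \<le> dist (snd (fst p)) (snd (snd p))}"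
      by (intro closed_Collect_conj closed_Collect_eq closed_Collect_le continuous_intros)
    have "compact (P i j k)" unfolding P_def
      by (intro compact_continuous_image compact_Int_closed compact_Times Kc cl continuous_intros)
    then show ?thesis by (intro borel_closed compact_imp_closed)
  qed
  have BdP: "Bd = (\<Union>i. \<Union>j. \<Union>k. P i j k)"
  proof (rule set_eqI iffI)+
    fix x assume "x \<in> Bd"
    then obtain y1 y2 where y: "(x, y1) \<in> G" "(x, y2) \<in> G" "y1 \<noteq> y2" by (auto simp: Bd_def)
    then obtain i j where ij: "(x, y1) \<in> K i" "(x, y2) \<in> K j" by (auto simp: G_def)
    have "dist y1 y2 > 0" using y(3) by simp
    then obtain k where k: "inverse (real (Suc k)) < dist y1 y2" using reals_Archimedean by blast
    have "((x, y1), (x, y2)) \<in> (K i \<times> K j) \<inter> {p. fst (fst p) = fst (snd p) \<and> 1 / real (Suc k) \<le> dist (snd (fst p)) (snd (snd p))}"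
      using ij k by (simp add: inverse_eq_divide)
    then have "x \<in> P i j k" unfolding P_def by (metis (no_types, lifting) fst_conv image_eqI)
    then show "x \<in> (\<Union>i. \<Union>j. \<Union>k. P i j k)" by blast
  next
    fix x assume "x \<in> (\<Union>i. \<Union>j. \<Union>k. P i j k)"
    then obtain i j k where "x \<in> P i j k" by blast
    then obtain a b where ab: "(a, b) \<in> K i \<times> K j" "fst a = fst b" "1 / real (Suc k) \<le> dist (snd a) (snd b)" "x = fst a"
      unfolding P_def by force
    have "dist (snd a) (snd b) > 0" using ab(3) by (smt (verit) divide_pos_pos of_nat_0_less_iff zero_less_Suc)
    then have "snd a \<noteq> snd b" by auto
    moreover have "(x, snd a) \<in> G" "(x, snd b) \<in> G"
    proof -
      have "a = (x, snd a)" "b = (x, snd b)" using ab(2,4) by (metis prod.collapse)+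
      then show "(x, snd a) \<in> G" "(x, snd b) \<in> G" using ab(1) unfolding G_def by (metis SigmaE2 UN_I UNIV_I)+
    qed
    ultimately show "x \<in> Bd" by (auto simp: Bd_def)
  qed
  have Bdb: "Bd \<in> sets borel" unfolding BdP using Pb by (intro sets.countable_UN') auto
  have Bdneg: "negligible Bd"
  proof -
    obtain D :: "'a set" where Dc: "countable D" and Dd: "\<And>U. open U \<Longrightarrow> U \<noteq> {} \<Longrightarrow> \<exists>y\<in>D. y \<in> U"
      using countable_dense_exists by blast
    define Ef where "Ef q r = fst ` (G \<inter> (UNIV \<times> cball q r))" for q :: 'a and r :: real
    have Efl: "Ef q r \<in> sets lebesgue" for q r
    proof -
      have "Ef q r \<in> sets lborel" unfolding Ef_def G_def using proj_borel[OF Kc closed_cball] by simp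
      then show ?thesis by (rule sets_completionI_sets)
    qed
    define Fam where "Fam = (\<lambda>(q, r, s). {x \<in> Ef q r. bad (Ef q r) s x}) ` (D \<times> (\<rat> \<times> {s \<in> \<rat>. s > 0}))"
    have cF: "countable Fam" unfolding Fam_def
      using Dc countable_rat by (intro countable_image countable_SIGMA) (auto intro: countable_subset[OF _ countable_rat])
    have nF: "negligible S" if SF: "S \<in> Fam" for S
    proof -
      obtain p where p: "p \<in> D \<times> (\<rat> \<times> {s \<in> \<rat>. s > 0})" "S = (\<lambda>(q, r, s). {x \<in> Ef q r. bad (Ef q r) s x}) p"
        using SF unfolding Fam_def by blast
      obtain q r s where pq: "p = (q, r, s)" by (cases p) auto
      have "s > 0" using p(1) pq by simp
      moreover have "S = {x \<in> Ef q r. bad (Ef q r) s x}" using p(2) pq by simp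
      ultimately show ?thesis using density_neg[OF Efl] by simp
    qed
    have sub: "Bd \<subseteq> \<Union>Fam"
    proof
      fix x0 assume "x0 \<in> Bd"
      then obtain y1 y2 where y: "(x0, y1) \<in> G" "(x0, y2) \<in> G" "y1 \<noteq> y2" by (auto simp: Bd_def)
      obtain yb where yb: "(x0, yb) \<in> G" and ex1: "\<exists>r0>0. \<exists>s>0. \<exists>\<rho>1>0. \<exists>u. norm u = 1 \<and> s \<le> 1/2 \<and>
         (\<forall>\<rho> x' y'. 0 < \<rho> \<longrightarrow> \<rho> < \<rho>1 \<longrightarrow> dist x' (x0 + (\<rho>/2) *\<^sub>R u) < s * \<rho> \<longrightarrow> dist y' yb < r0 \<longrightarrow> (x', y') \<notin> G)"
        by (rule exE[OF geo[OF Gmono y]], elim conjE, rule that, assumption+)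
      obtain r0 where r0: "r0 > 0" and ex2: "\<exists>s>0. \<exists>\<rho>1>0. \<exists>u. norm u = 1 \<and> s \<le> 1/2 \<and>
         (\<forall>\<rho> x' y'. 0 < \<rho> \<longrightarrow> \<rho> < \<rho>1 \<longrightarrow> dist x' (x0 + (\<rho>/2) *\<^sub>R u) < s * \<rho> \<longrightarrow> dist y' yb < r0 \<longrightarrow> (x', y') \<notin> G)"
        by (rule exE[OF ex1], elim conjE, rule that, assumption+)
      obtain s where s: "s > 0" and ex3: "\<exists>\<rho>1>0. \<exists>u. norm u = 1 \<and> s \<le> 1/2 \<and>
         (\<forall>\<rho> x' y'. 0 < \<rho> \<longrightarrow> \<rho> < \<rho>1 \<longrightarrow> dist x' (x0 + (\<rho>/2) *\<^sub>R u) < s * \<rho> \<longrightarrow> dist y' yb < r0 \<longrightarrow> (x', y') \<notin> G)"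
        by (rule exE[OF ex2], elim conjE, rule that, assumption+)
      obtain \<rho>1 where \<rho>1: "\<rho>1 > 0" and ex4: "\<exists>u. norm u = 1 \<and> s \<le> 1/2 \<and>
         (\<forall>\<rho> x' y'. 0 < \<rho> \<longrightarrow> \<rho> < \<rho>1 \<longrightarrow> dist x' (x0 + (\<rho>/2) *\<^sub>R u) < s * \<rho> \<longrightarrow> dist y' yb < r0 \<longrightarrow> (x', y') \<notin> G)"
        by (rule exE[OF ex3], elim conjE, rule that, assumption+)
      obtain u where u: "norm u = 1" and s2: "s \<le> 1/2" and nG0: "\<forall>\<rho> x' y'. 0 < \<rho> \<longrightarrow> \<rho> < \<rho>1 \<longrightarrow> dist x' (x0 + (\<rho>/2) *\<^sub>R u) < s * \<rho> \<longrightarrow> dist y' yb < r0 \<longrightarrow> (x', y') \<notin> G"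
        by (rule exE[OF ex4], elim conjE, rule that, assumption+)
      have nG: "(x', y') \<notin> G" if "0 < \<rho>" "\<rho> < \<rho>1" "dist x' (x0 + (\<rho>/2) *\<^sub>R u) < s * \<rho>" "dist y' yb < r0" for \<rho> x' y'
        using nG0 that by blast
      obtain q where q: "q \<in> D" "q \<in> ball yb (r0/3)" using Dd[of "ball yb (r0/3)"] r0 by auto
      have dq: "dist q yb < r0/3" using q(2) by (simp add: dist_commute)
      obtain r where r: "r \<in> \<rat>" "dist q yb < r" "r < r0/3" using Rats_dense_in_real[OF dq] by blast
      obtain s' where s': "s' \<in> \<rat>" "0 < s'" "s' < s" using Rats_dense_in_real[OF s] by blast
      have x0E: "x0 \<in> Ef q r"
      proof -
        have "(x0, yb) \<in> G \<inter> (UNIV \<times> cball q r)" using yb r(2) by simp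
        then show ?thesis unfolding Ef_def by (metis fst_conv image_eqI)
      qed
      have "bad (Ef q r) s' x0"
        unfolding bad_def
      proof (intro allI impI)
        fix \<rho>0 :: real assume \<rho>0: "\<rho>0 > 0"
        define \<rho> where "\<rho> = min \<rho>0 \<rho>1 / 2"
        have \<rho>: "0 < \<rho>" "\<rho> < \<rho>0" "\<rho> < \<rho>1" using \<rho>0 \<rho>1 by (auto simp: \<rho>_def)
        define z where "z = x0 + (\<rho>/2) *\<^sub>R u"
        have dz: "dist x0 z = \<rho>/2" using u \<rho> by (simp add: z_def dist_norm)
        have s'\<rho>: "s' * \<rho> < s * \<rho>" "s * \<rho> \<le> \<rho>/2" using s' s2 \<rho> by auto
        have "ball z (s' * \<rho>) \<subseteq> ball x0 \<rho>"
        proof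
          fix y assume "y \<in> ball z (s' * \<rho>)"
          then have "dist z y < s' * \<rho>" by simp
          moreover have "dist x0 y \<le> dist x0 z + dist z y" by (rule dist_triangle)
          ultimately show "y \<in> ball x0 \<rho>" using dz s'\<rho> by simp
        qed
        moreover have "ball z (s' * \<rho>) \<inter> Ef q r = {}"
        proof (rule ccontr)
          assume "ball z (s' * \<rho>) \<inter> Ef q r \<noteq> {}"
          then obtain x' where x'b: "x' \<in> ball z (s' * \<rho>)" and x'E: "x' \<in> Ef q r" by blast
          then obtain y' where x'y': "(x', y') \<in> G" "y' \<in> cball q r" by (auto simp: Ef_def)
          have "dist y' yb \<le> dist y' q + dist q yb" by (rule dist_triangle)
          then have "dist y' yb < r0" using x'y'(2) r dq r0 by (simp add: dist_commute)
          moreover have "dist x' (x0 + (\<rho>/2) *\<^sub>R u) < s * \<rho>" using x'b s'\<rho> by (simp add: z_def dist_commute)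
          ultimately have "(x', y') \<notin> G" using nG[OF \<rho>(1) \<rho>(3)] by blast
          then show False using x'y' by simp
        qed
        ultimately show "\<exists>\<rho>. 0 < \<rho> \<and> \<rho> < \<rho>0 \<and> (\<exists>z. ball z (s' * \<rho>) \<subseteq> ball x0 \<rho> \<and> ball z (s' * \<rho>) \<inter> Ef q r = {})"
          using \<rho> by blast
      qed
      then have "x0 \<in> {x \<in> Ef q r. bad (Ef q r) s' x}" using x0E by simp
      moreover have "{x \<in> Ef q r. bad (Ef q r) s' x} \<in> Fam"
        unfolding Fam_def using q(1) r(1) s' by (intro image_eqI[of _ _ "(q, r, s')"]) auto
      ultimately show "x0 \<in> \<Union>Fam" by blast
    qed
    show ?thesis by (rule negligible_subset[OF negligible_countable_Union[OF cF nF] sub])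
  qed
  have Bdmu: "Bd \<in> null_sets \<mu>"
  proof -
    have "Bd \<in> null_sets lebesgue" using Bdneg by (simp add: negligible_iff_null_sets)
    then have "emeasure lebesgue Bd = 0" by auto
    then have "emeasure lborel Bd = 0" using Bdb by simp
    then have "Bd \<in> null_sets lborel" using Bdb by (auto intro: null_setsI)
    then show ?thesis using mu_ac by (auto simp: absolutely_continuous_def)
  qed
  have fstm: "fst \<in> measurable \<gamma> borel"
    using borel_measurable_continuous_onI[OF continuous_on_fst[OF continuous_on_id]]
    by (simp add: measurable_cong_sets[OF gsets refl])
  have sndm: "snd \<in> measurable \<gamma> borel"
    using borel_measurable_continuous_onI[OF continuous_on_snd[OF continuous_on_id]]
    by (simp add: measurable_cong_sets[OF gsets refl])
  have Bdg: "fst -` Bd \<inter> space \<gamma> \<in> null_sets \<gamma>"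
  proof -
    have "emeasure \<gamma> (fst -` Bd \<inter> space \<gamma>) = emeasure (distr \<gamma> borel fst) Bd"
      by (rule emeasure_distr[OF fstm Bdb, symmetric])
    also have "\<dots> = 0" using Bdmu mfst by auto
    finally show ?thesis using fstm Bdb by (auto intro: null_setsI measurable_sets)
  qed
  define A where "A = fst ` G"
  define T where "T x = (if x \<in> A \<and> x \<notin> Bd then (THE y. (x, y) \<in> G) else 0)" for x
  have Tx: "T x = y" if xy: "(x, y) \<in> G" and xB: "x \<notin> Bd" for x y
  proof -
    have "x \<in> A" using xy by (force simp: A_def)
    moreover have "(THE y. (x, y) \<in> G) = y"
    proof (rule the_equality)
      show "(x, y) \<in> G" by (rule xy)
      fix y' assume "(x, y') \<in> G"
      then show "y' = y" using xy xB unfolding Bd_def by blast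
    qed
    ultimately show ?thesis using xB by (simp add: T_def)
  qed
  have projb: "fst ` (G \<inter> (UNIV \<times> F)) \<in> sets borel" if "closed F" for F
    unfolding G_def by (rule proj_borel[OF Kc that])
  have Ab: "A \<in> sets borel" using projb[of UNIV] by (simp add: A_def)
  have pre: "T -` F = (fst ` (G \<inter> (UNIV \<times> F)) - Bd) \<union> {x. x \<notin> A - Bd \<and> 0 \<in> F}" for F
  proof (rule set_eqI)
    fix x
    show "x \<in> T -` F \<longleftrightarrow> x \<in> (fst ` (G \<inter> (UNIV \<times> F)) - Bd) \<union> {x. x \<notin> A - Bd \<and> 0 \<in> F}"
    proof (cases "x \<in> A \<and> x \<notin> Bd")
      case True
      then obtain y where xy: "(x, y) \<in> G" and xB: "x \<notin> Bd" by (auto simp: A_def)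
      have Txy: "T x = y" by (rule Tx[OF xy xB])
      have "x \<in> fst ` (G \<inter> (UNIV \<times> F)) \<longleftrightarrow> y \<in> F"
      proof
        assume "x \<in> fst ` (G \<inter> (UNIV \<times> F))"
        then obtain y' where "(x, y') \<in> G" "y' \<in> F" by force
        moreover have "y' = y" using Tx[OF \<open>(x, y') \<in> G\<close> xB] Txy by simp
        ultimately show "y \<in> F" by simp
      next
        assume "y \<in> F"
        then have "(x, y) \<in> G \<inter> (UNIV \<times> F)" using xy by simp
        then show "x \<in> fst ` (G \<inter> (UNIV \<times> F))" by (metis fst_conv image_eqI)
      qed
      then show ?thesis using True Txy by auto
    next
      case False
      then have "T x = 0" unfolding T_def by (simp only: if_False)
      moreover have "x \<notin> fst ` (G \<inter> (UNIV \<times> F)) - Bd" using False by (auto simp: A_def)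
      ultimately show ?thesis using False by auto
    qed
  qed
  have preb: "T -` F \<in> sets borel" if "closed F" for F
  proof -
    have "{x. x \<notin> A - Bd \<and> 0 \<in> F} = (if 0 \<in> F then UNIV - (A - Bd) else {})" by auto
    then have "{x. x \<notin> A - Bd \<and> 0 \<in> F} \<in> sets borel" using Ab Bdb by auto
    then show ?thesis unfolding pre using projb[OF that] Bdb by auto
  qed
  have Tm: "T \<in> borel_measurable borel"
  proof (rule borel_measurableI)
    fix S :: "'a set" assume "open S"
    then have "closed (- S)" by auto
    have "T -` S = - (T -` (- S))" by auto
    then show "T -` S \<inter> space borel \<in> sets borel" using preb[OF \<open>closed (- S)\<close>] by auto
  qed
  have AE: "AE p in \<gamma>. snd p = T (fst p)"
  proof (rule AE_I')
    show "(UNIV - G) \<union> (fst -` Bd \<inter> space \<gamma>) \<in> null_sets \<gamma>" using Gnull Bdg by (rule null_sets.Un)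
    show "{p \<in> space \<gamma>. \<not> snd p = T (fst p)} \<subseteq> (UNIV - G) \<union> (fst -` Bd \<inter> space \<gamma>)"
    proof
      fix p assume p: "p \<in> {p \<in> space \<gamma>. \<not> snd p = T (fst p)}"
      show "p \<in> (UNIV - G) \<union> (fst -` Bd \<inter> space \<gamma>)"
      proof (rule ccontr)
        assume "p \<notin> (UNIV - G) \<union> (fst -` Bd \<inter> space \<gamma>)"
        then have "(fst p, snd p) \<in> G" "fst p \<notin> Bd" using spg by auto
        then have "T (fst p) = snd p" by (rule Tx)
        then show False using p by simp
      qed
    qed
  qed
  have "distr \<mu> borel T = distr (distr \<gamma> borel fst) borel T" using mfst by simp
  also have "\<dots> = distr \<gamma> borel (T \<circ> fst)" using Tm fstm by (intro distr_distr) auto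
  also have "\<dots> = distr \<gamma> borel snd"
  proof (rule distr_cong_AE)
    show "AE x in \<gamma>. (T \<circ> fst) x = snd x" using AE by (auto elim: AE_mp)
    show "T \<circ> fst \<in> measurable \<gamma> borel" using Tm fstm by (intro measurable_comp[OF fstm]) auto
    show "snd \<in> measurable \<gamma> borel" by (rule sndm)
  qed auto
  also have "\<dots> = \<nu>" by (rule msnd)
  finally have D: "distr \<mu> borel T = \<nu>" .
  show ?thesis using Tm AE D by blast
qed

end
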